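(* Let an FCA with state set $S$, neighborhood $m=l+1+r$, local rule $f$ and boundary type $b\in\{\text{null},\text{periodic}\}$ be given, and let $G$ be its reversibility graph. Suppose $N$ is a negative vertex of $G$ with value $k\ge1$ and two circuits of lengths $r_1,r_2$ pass through $N$, with $\gcd(r_1,r_2)=1$. Then the FCA is not $n$-cell-reversible for every integer $n>k+r_1r_2-r_1-r_2$.
   Context: A one-dimensional finite cellular automaton (FCA) is given by a state set $S=\{0,1,\dots,s-1\}$, integers $l,r\ge 0$ with neighborhood size $m=l+1+r\ge 2$, a local rule $f:S^m\to S$, and a boundary type $b\in\{\text{null},\text{periodic}\}$. For $n\ge 1$ the global map $\tau_n:S^n\to S^n$ sends $(x_0,\dots,x_{n-1})$ to $(y_0,\dots,y_{n-1})$ with $y_i=f(x_{i-l},\dots,x_{i+r})$, where for the null boundary $x_j=0$ whenever $j<0$ or $j>n-1$, and for the periodic boundary indices are taken modulo $n$. The FCA is $n$-cell-reversible if $\tau_n$ is a bijection (equivalently, since $S^n$ is finite, surjective). Reversibility graph (RG). Null boundary: vertices are subsets of $S^{m-1}$; the root is $N_0=\{(a_1,\dots,a_{m-1})\in S^{m-1}: a_1=\dots=a_l=0\}$; the acceptance set is $R=\{(a_1,\dots,a_{m-1})\in S^{m-1}: a_{m-r}=\dots=a_{m-1}=0\}$ (so $R=S^{m-1}$ if $r=0$); for a subset $N$ and $c\in S$, $\delta(N,c)=\{(a_1,\dots,a_{m-1})\in S^{m-1}:\exists a_0\in S,\ (a_0,\dots,a_{m-2})\in N,\ f(a_0,a_1,\dots,a_{m-1})=c\}$.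 Periodic boundary: vertices are subsets of $S^{m-1}\times S^{m-1}$; the root and the acceptance set are $N_0=R=\{(a,a):a\in S^{m-1}\}$; $\delta(N,c)=\{((a_1,\dots,a_{m-1}),(b_1,\dots,b_{m-1})):\exists b_0\in S,\ ((a_1,\dots,a_{m-1}),(b_0,\dots,b_{m-2}))\in N,\ f(b_0,\dots,b_{m-1})=c\}$. In both cases the RG is the directed graph whose vertex set consists of all subsets obtainable from $N_0$ by repeatedly applying $\delta$ (including $N_0$; equal subsets are the same vertex; the empty set may occur), with, for each vertex $N$ and each $c\in S$, an edge labelled $c$ from $N$ to $\delta(N,c)$. The value of a vertex $N$ is the length of a shortest directed path from $N_0$ to $N$. A vertex $N$ is negative if $N\cap R=\emptyset$. A circuit is an elementary directed cycle of the RG (a closed directed path with no repeated vertex other than its start = end; a loop is a circuit of length $1$); its length is its number of edges, and it passes through $N$ if $N$ is one of its vertices. *)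

theory Defs
  imports Main
begin

datatype boundary = Null | Periodic

definition configs :: "nat \<Rightarrow> nat \<Rightarrow> nat list set" where
  "configs s n = {x. length x = n \<and> set x \<subseteq> {..<s}}"

definition cell :: "boundary \<Rightarrow> nat list \<Rightarrow> int \<Rightarrow> nat" where
  "cell b x j = (let n = int (length x) in
     (case b of Null \<Rightarrow> (if 0 \<le> j \<and> j < n then x ! nat j else 0)
              | Periodic \<Rightarrow> x ! nat (j mod n)))"

definition global_map :: "boundary \<Rightarrow> nat \<Rightarrow> nat \<Rightarrow> (nat list \<Rightarrow> nat) \<Rightarrow> nat list \<Rightarrow> nat list" where
  "global_map b l r f x =
     map (\<lambda>i. f (map (\<lambda>j. cell b x (int i + int j - int l)) [0..<l+1+r])) [0..<length x]"

definition n_cell_reversible :: "boundary \<Rightarrow> nat \<Rightarrow> nat \<Rightarrow> nat \<Rightarrow> (nat list \<Rightarrow> nat) \<Rightarrow> nat \<Rightarrow> bool" where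
  "n_cell_reversible b s l r f n = bij_betw (global_map b l r f) (configs s n) (configs s n)"

definition local_rule :: "nat \<Rightarrow> nat \<Rightarrow> (nat list \<Rightarrow> nat) \<Rightarrow> bool" where
  "local_rule s m f = (\<forall>xs. length xs = m \<and> set xs \<subseteq> {..<s} \<longrightarrow> f xs < s)"

definition deltas :: "('a set \<Rightarrow> nat \<Rightarrow> 'a set) \<Rightarrow> 'a set \<Rightarrow> nat list \<Rightarrow> 'a set" where
  "deltas \<delta> N0 w = foldl \<delta> N0 w"

definition rg_vertices :: "nat \<Rightarrow> 'a set \<Rightarrow> ('a set \<Rightarrow> nat \<Rightarrow> 'a set) \<Rightarrow> 'a set set" where
  "rg_vertices s N0 \<delta> = {deltas \<delta> N0 w | w. set w \<subseteq> {..<s}}"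

definition rg_value :: "nat \<Rightarrow> 'a set \<Rightarrow> ('a set \<Rightarrow> nat \<Rightarrow> 'a set) \<Rightarrow> 'a set \<Rightarrow> nat" where
  "rg_value s N0 \<delta> N = (LEAST k. \<exists>w. length w = k \<and> set w \<subseteq> {..<s} \<and> deltas \<delta> N0 w = N)"

definition rg_circuit :: "nat \<Rightarrow> ('a set \<Rightarrow> nat \<Rightarrow> 'a set) \<Rightarrow> 'a set \<Rightarrow> nat \<Rightarrow> bool" where
  "rg_circuit s \<delta> N L = (\<exists>vs. length vs = L \<and> L \<ge> 1 \<and> vs ! 0 = N \<and> distinct vs \<and>
      (\<forall>i<L. \<exists>c<s. \<delta> (vs ! i) c = vs ! ((i + 1) mod L)))"

definition neg_vertex_condition ::
  "nat \<Rightarrow> 'a set \<Rightarrow> 'a set \<Rightarrow> ('a set \<Rightarrow> nat \<Rightarrow> 'a set) \<Rightarrow> nat \<Rightarrow> nat \<Rightarrow> nat \<Rightarrow> bool" where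
  "neg_vertex_condition s N0 R \<delta> k r1 r2 = (\<exists>N. N \<in> rg_vertices s N0 \<delta> \<and> N \<inter> R = {} \<and>
      rg_value s N0 \<delta> N = k \<and> rg_circuit s \<delta> N r1 \<and> rg_circuit s \<delta> N r2)"

definition tuples :: "nat \<Rightarrow> nat \<Rightarrow> nat list set" where
  "tuples s len = {a. length a = len \<and> set a \<subseteq> {..<s}}"

definition null_root :: "nat \<Rightarrow> nat \<Rightarrow> nat \<Rightarrow> nat list set" where
  "null_root s l r = {a \<in> tuples s (l + r). \<forall>x \<in> set (take l a). x = 0}"

definition null_accept :: "nat \<Rightarrow> nat \<Rightarrow> nat \<Rightarrow> nat list set" where
  "null_accept s l r = {a \<in> tuples s (l + r). \<forall>x \<in> set (drop l a). x = 0}"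

definition null_delta :: "nat \<Rightarrow> nat \<Rightarrow> nat \<Rightarrow> (nat list \<Rightarrow> nat) \<Rightarrow> nat list set \<Rightarrow> nat \<Rightarrow> nat list set" where
  "null_delta s l r f N c = {a \<in> tuples s (l + r).
      \<exists>a0<s. (a0 # butlast a) \<in> N \<and> f (a0 # a) = c}"

definition per_root :: "nat \<Rightarrow> nat \<Rightarrow> nat \<Rightarrow> (nat list \<times> nat list) set" where
  "per_root s l r = {(a, a) | a. a \<in> tuples s (l + r)}"

definition per_delta :: "nat \<Rightarrow> nat \<Rightarrow> nat \<Rightarrow> (nat list \<Rightarrow> nat) \<Rightarrow>
    (nat list \<times> nat list) set \<Rightarrow> nat \<Rightarrow> (nat list \<times> nat list) set" where
  "per_delta s l r f N c = {(a, b). a \<in> tuples s (l + r) \<and> b \<in> tuples s (l + r) \<and>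
      (\<exists>b0<s. (a, b0 # butlast b) \<in> N \<and> f (b0 # b) = c)}"

definition RG_condition :: "boundary \<Rightarrow> nat \<Rightarrow> nat \<Rightarrow> nat \<Rightarrow> (nat list \<Rightarrow> nat) \<Rightarrow> nat \<Rightarrow> nat \<Rightarrow> nat \<Rightarrow> bool" where
  "RG_condition b s l r f k r1 r2 = (case b of
      Null \<Rightarrow> neg_vertex_condition s (null_root s l r) (null_accept s l r) (null_delta s l r f) k r1 r2
    | Periodic \<Rightarrow> neg_vertex_condition s (per_root s l r) (per_root s l r) (per_delta s l r f) k r1 r2)"

end

theory Submission imports Defs begin

lemma frob:
  fixes r1 r2 :: nat and t :: int
  assumes "r1 \<ge> 1" "r2 \<ge> 1" "coprime r1 r2" "t \<ge> (int r1 - 1) * (int r2 - 1)"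
  shows "\<exists>p q::nat. t = int p * int r1 + int q * int r2"
proof -
  have cop: "coprime (int r1) (int r2)" using assms(3) by simp
  obtain u v where uv: "u * int r1 + v * int r2 = 1"
    using bezout_int[of "int r1" "int r2"] cop by (auto simp: coprime_iff_gcd_eq_1)
  define p where "p = (u * t) mod int r2"
  have p0: "0 \<le> p" and p1: "p < int r2" using assms(2) by (auto simp: p_def)
  have "(p * int r1) mod int r2 = (u * t * int r1) mod int r2"
    by (simp add: p_def mod_mult_left_eq)
  also have "u * t * int r1 = t - t * v * int r2" using uv by (simp add: algebra_simps) (metis mult.commute ring_class.ring_distribs(1) mult.assoc mult_1_right)
  also have "(t - t * v * int r2) mod int r2 = t mod int r2" by (simp add: mod_diff_eq[symmetric])
  finally have "int r2 dvd (t - p * int r1)" by (metis dvd_diff_commute mod_eq_dvd_iff)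
  then obtain q where q: "t - p * int r1 = int r2 * q" by (auto simp: dvd_def)
  have "p * int r1 \<le> (int r2 - 1) * int r1" using p1 by (intro mult_right_mono) auto
  hence "int r2 * q > - int r2" using q assms(4) by (simp add: algebra_simps)
  have "q \<ge> 0"
  proof (rule ccontr)
    assume "\<not> q \<ge> 0" hence "q \<le> -1" by simp
    hence "int r2 * q \<le> int r2 * (-1)" by (intro mult_left_mono) auto
    thus False using \<open>int r2 * q > - int r2\<close> by simp
  qed
  show ?thesis
    by (rule exI[of _ "nat p"], rule exI[of _ "nat q"]) (use q p0 \<open>q \<ge> 0\<close> in \<open>simp add: algebra_simps\<close>)
qed


lemma circuit_word:
  assumes "rg_circuit s \<delta> N L"
  shows "\<exists>u. length u = L \<and> set u \<subseteq> {..<s} \<and> foldl \<delta> N u = N"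
proof -
  obtain vs where vs: "length vs = L" "L \<ge> 1" "vs ! 0 = N"
    "\<forall>i<L. \<exists>c<s. \<delta> (vs ! i) c = vs ! ((i + 1) mod L)"
    using assms unfolding rg_circuit_def by blast
  have "i \<le> L \<Longrightarrow> \<exists>u. length u = i \<and> set u \<subseteq> {..<s} \<and> foldl \<delta> N u = vs ! (i mod L)" for i
  proof (induction i)
    case 0 then show ?case using vs by simp
  next
    case (Suc i)
    then obtain u where u: "length u = i" "set u \<subseteq> {..<s}" "foldl \<delta> N u = vs ! (i mod L)" by auto
    have "i < L" using Suc by simp
    then obtain c where c: "c < s" "\<delta> (vs ! i) c = vs ! ((i + 1) mod L)" using vs by blast
    show ?case
      by (rule exI[of _ "u @ [c]"]) (use u c \<open>i < L\<close> in simp)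
  qed
  from this[of L] show ?thesis using vs by auto
qed

lemma foldl_rep: "foldl \<delta> N u = N \<Longrightarrow> foldl \<delta> N (concat (replicate p u)) = N"
  by (induction p) auto

lemma word_exists:
  assumes "neg_vertex_condition s N0 R \<delta> k r1 r2" "coprime r1 r2"
    "int n > int k + int r1 * int r2 - int r1 - int r2"
  shows "\<exists>y. length y = n \<and> set y \<subseteq> {..<s} \<and> deltas \<delta> N0 y \<inter> R = {}"
proof -
  obtain N where N: "N \<in> rg_vertices s N0 \<delta>" "N \<inter> R = {}" "rg_value s N0 \<delta> N = k"
     "rg_circuit s \<delta> N r1" "rg_circuit s \<delta> N r2"
    using assms(1) unfolding neg_vertex_condition_def by blast
  have r1: "r1 \<ge> 1" and r2: "r2 \<ge> 1" using N(4,5) unfolding rg_circuit_def by auto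
  obtain w0 where "set w0 \<subseteq> {..<s}" "deltas \<delta> N0 w0 = N" using N(1) unfolding rg_vertices_def by blast
  hence ex: "\<exists>w. length w = length w0 \<and> set w \<subseteq> {..<s} \<and> deltas \<delta> N0 w = N" by blast
  have "\<exists>w. length w = k \<and> set w \<subseteq> {..<s} \<and> deltas \<delta> N0 w = N"
  proof -
    let ?P = "\<lambda>k. \<exists>w. length w = k \<and> set w \<subseteq> {..<s} \<and> deltas \<delta> N0 w = N"
    have "?P (Least ?P)" using LeastI[of ?P "length w0"] ex by blast
    thus ?thesis using N(3) unfolding rg_value_def by simp
  qed
  then obtain w where w: "length w = k" "set w \<subseteq> {..<s}" "deltas \<delta> N0 w = N" by blast
  obtain u1 where u1: "length u1 = r1" "set u1 \<subseteq> {..<s}" "foldl \<delta> N u1 = N"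
    using circuit_word[OF N(4)] by blast
  obtain u2 where u2: "length u2 = r2" "set u2 \<subseteq> {..<s}" "foldl \<delta> N u2 = N"
    using circuit_word[OF N(5)] by blast
  have "int n - int k \<ge> (int r1 - 1) * (int r2 - 1)" using assms(3) by (simp add: algebra_simps)
  then obtain p q :: nat where pq: "int n - int k = int p * int r1 + int q * int r2"
    using frob[OF r1 r2 assms(2)] by blast
  hence "int n = int (k + p * r1 + q * r2)" by simp
  hence nn: "n = k + p * r1 + q * r2" by (simp only: of_nat_eq_iff)
  define y where "y = w @ concat (replicate p u1) @ concat (replicate q u2)"
  have "length y = n" using nn w u1 u2 by (simp add: y_def length_concat sum_list_replicate)
  moreover have "set y \<subseteq> {..<s}" using w u1 u2 by (auto simp: y_def)
  moreover have "deltas \<delta> N0 y = N"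
    using w u1 u2 by (simp add: y_def deltas_def foldl_rep)
  ultimately show ?thesis using N(2) by blast
qed


definition win :: "(int \<Rightarrow> nat) \<Rightarrow> nat \<Rightarrow> nat \<Rightarrow> nat \<Rightarrow> nat list" where
  "win g l L j = map (\<lambda>t. g (int j + int t - int l)) [0..<L]"

lemma win_butlast:
  assumes "L \<ge> 1"
  shows "g (int j - int l) # butlast (win g l L (Suc j)) = win g l L j"
proof (rule nth_equalityI)
  show "length (g (int j - int l) # butlast (win g l L (Suc j))) = length (win g l L j)"
    using assms by (simp add: win_def)
  fix i assume i: "i < length (g (int j - int l) # butlast (win g l L (Suc j)))"
  show "(g (int j - int l) # butlast (win g l L (Suc j))) ! i = win g l L j ! i"
  proof (cases i)
    case 0 then show ?thesis using assms by (simp add: win_def)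
  next
    case (Suc i') then show ?thesis using i assms by (simp add: win_def nth_butlast algebra_simps)
  qed
qed

lemma win_cons:
  "g (int j - int l) # win g l L (Suc j) = map (\<lambda>jj. g (int j + int jj - int l)) [0..<Suc L]"
proof (rule nth_equalityI)
  fix i assume i: "i < length (g (int j - int l) # win g l L (Suc j))"
  show "(g (int j - int l) # win g l L (Suc j)) ! i = map (\<lambda>jj. g (int j + int jj - int l)) [0..<Suc L] ! i"
  proof (cases i)
    case 0 then show ?thesis by (simp del: upt_Suc add: win_def)
  next
    case (Suc i') then show ?thesis using i by (simp del: upt_Suc add: win_def algebra_simps)
  qed
qed (simp add: win_def)

lemma gm_nth:
  "i < length x \<Longrightarrow> global_map b l r f x ! i = f (map (\<lambda>jj. cell b x (int i + int jj - int l)) [0..<l+1+r])"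
  by (simp add: global_map_def)

lemma cell_null_lt:
  assumes "set x \<subseteq> {..<s}" "s \<ge> 1" shows "cell Null x j < s"
proof (cases "0 \<le> j \<and> j < int (length x)")
  case True
  hence "x ! nat j \<in> set x" by (intro nth_mem) linarith
  then show ?thesis using True assms by (auto simp: cell_def Let_def)
qed (use assms in \<open>auto simp: cell_def Let_def\<close>)

lemma cell_null_neg: "j < 0 \<Longrightarrow> cell Null x j = 0"
  by (simp add: cell_def Let_def)

lemma cell_null_big: "j \<ge> int (length x) \<Longrightarrow> cell Null x j = 0"
  by (simp add: cell_def Let_def)

lemma cell_per_lt:
  assumes "set x \<subseteq> {..<s}" "length x \<ge> 1" shows "cell Periodic x j < s"
proof -
  have "int (length x) > 0" using assms(2) by linarith
  hence "0 \<le> j mod int (length x)" "j mod int (length x) < int (length x)" by simp_all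
  hence "nat (j mod int (length x)) < length x"
    by (simp add: nat_less_iff)
  hence "x ! nat (j mod int (length x)) \<in> set x" by (intro nth_mem)
  then show ?thesis using assms by (auto simp: cell_def Let_def)
qed

lemma cell_per_shift: "cell Periodic x (int (length x) + j) = cell Periodic x j"
  by (simp add: cell_def Let_def)

lemma null_delta_I:
  "a \<in> tuples s (l + r) \<Longrightarrow> a0 < s \<Longrightarrow> a0 # butlast a \<in> N \<Longrightarrow> f (a0 # a) = c
   \<Longrightarrow> a \<in> null_delta s l r f N c"
  unfolding null_delta_def by blast

lemma per_delta_I:
  "a \<in> tuples s (l + r) \<Longrightarrow> b \<in> tuples s (l + r) \<Longrightarrow> b0 < s \<Longrightarrow> (a, b0 # butlast b) \<in> N
   \<Longrightarrow> f (b0 # b) = c \<Longrightarrow> (a, b) \<in> per_delta s l r f N c"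
  unfolding per_delta_def by blast

lemma null_inv:
  assumes x: "x \<in> configs s n" and s: "s \<ge> 1" and m: "l + r \<ge> 1"
  shows "j \<le> n \<Longrightarrow> win (cell Null x) l (l + r) j \<in>
     deltas (null_delta s l r f) (null_root s l r) (take j (global_map Null l r f x))"
proof (induction j)
  case 0
  have "win (cell Null x) l (l + r) 0 \<in> null_root s l r"
    using x s cell_null_lt[of x s] cell_null_neg
    by (auto simp: null_root_def tuples_def win_def configs_def take_map)
  then show ?case by (simp add: deltas_def)
next
  case (Suc j)
  let ?y = "global_map Null l r f x"
  have ln: "length x = n" "set x \<subseteq> {..<s}" using x by (auto simp: configs_def)
  have jn: "j < length ?y" using Suc ln by (simp add: global_map_def)
  have tk: "take (Suc j) ?y = take j ?y @ [?y ! j]" using jn by (simp add: take_Suc_conv_app_nth)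
  have IH: "win (cell Null x) l (l + r) j \<in> deltas (null_delta s l r f) (null_root s l r) (take j ?y)"
    using Suc by simp
  have "win (cell Null x) l (l + r) (Suc j) \<in> null_delta s l r f (deltas (null_delta s l r f) (null_root s l r) (take j ?y)) (?y ! j)"
  proof -
    have 1: "win (cell Null x) l (l + r) (Suc j) \<in> tuples s (l + r)"
      using cell_null_lt[OF ln(2) s] by (auto simp: tuples_def win_def)
    have 2: "cell Null x (int j - int l) < s" using cell_null_lt[OF ln(2) s] .
    have 3: "cell Null x (int j - int l) # butlast (win (cell Null x) l (l + r) (Suc j))
       \<in> deltas (null_delta s l r f) (null_root s l r) (take j ?y)"
      using IH win_butlast[OF m] by simp
    have 4: "f (cell Null x (int j - int l) # win (cell Null x) l (l + r) (Suc j)) = ?y ! j"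
      using jn win_cons[of "cell Null x" j l "l+r"] by (simp add: gm_nth global_map_def)
    show ?thesis using null_delta_I[where l=l and r=r and s=s and f=f, OF 1 2 3 4] .
  qed
  then show ?case using tk by (simp add: deltas_def)
qed


lemma per_inv:
  assumes x: "x \<in> configs s n" and n: "n \<ge> 1" and m: "l + r \<ge> 1"
  shows "j \<le> n \<Longrightarrow> (win (cell Periodic x) l (l + r) 0, win (cell Periodic x) l (l + r) j) \<in>
     deltas (per_delta s l r f) (per_root s l r) (take j (global_map Periodic l r f x))"
proof (induction j)
  have ln: "length x = n" "set x \<subseteq> {..<s}" using x by (auto simp: configs_def)
  have lt: "cell Periodic x j < s" for j using cell_per_lt[OF ln(2)] ln(1) n by simp
  case 0
  have "win (cell Periodic x) l (l + r) 0 \<in> tuples s (l + r)"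
    using lt by (auto simp: tuples_def win_def)
  then show ?case by (simp add: deltas_def per_root_def)
next
  case (Suc j)
  let ?y = "global_map Periodic l r f x"
  let ?g = "cell Periodic x"
  have ln: "length x = n" "set x \<subseteq> {..<s}" using x by (auto simp: configs_def)
  have lt: "cell Periodic x j < s" for j using cell_per_lt[OF ln(2)] ln(1) n by simp
  have jn: "j < length ?y" using Suc ln by (simp add: global_map_def)
  have tk: "take (Suc j) ?y = take j ?y @ [?y ! j]" using jn by (simp add: take_Suc_conv_app_nth)
  have IH: "(win ?g l (l + r) 0, win ?g l (l + r) j) \<in> deltas (per_delta s l r f) (per_root s l r) (take j ?y)"
    using Suc by simp
  have "(win ?g l (l + r) 0, win ?g l (l + r) (Suc j)) \<in> per_delta s l r f (deltas (per_delta s l r f) (per_root s l r) (take j ?y)) (?y ! j)"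
  proof -
    have 0: "win ?g l (l + r) 0 \<in> tuples s (l + r)"
      using lt by (auto simp: tuples_def win_def)
    have 1: "win ?g l (l + r) (Suc j) \<in> tuples s (l + r)"
      using lt by (auto simp: tuples_def win_def)
    have 2: "?g (int j - int l) < s" using lt .
    have 3: "(win ?g l (l + r) 0, ?g (int j - int l) # butlast (win ?g l (l + r) (Suc j)))
       \<in> deltas (per_delta s l r f) (per_root s l r) (take j ?y)"
      using IH win_butlast[OF m] by simp
    have 4: "f (?g (int j - int l) # win ?g l (l + r) (Suc j)) = ?y ! j"
      using jn win_cons[of ?g j l "l+r"] by (simp add: gm_nth global_map_def)
    show ?thesis using per_delta_I[where l=l and r=r and s=s and f=f, OF 0 1 2 3 4] .
  qed
  then show ?case using tk by (simp add: deltas_def)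
qed

lemma win_per_n: "win (cell Periodic x) l L (length x) = win (cell Periodic x) l L 0"
proof -
  have "cell Periodic x (int (length x) + int t - int l) = cell Periodic x (int 0 + int t - int l)" for t
    using cell_per_shift[of x "int t - int l"] by (simp add: algebra_simps)
  thus ?thesis by (simp add: win_def)
qed

theorem corollary2:
  fixes b :: boundary and s l r k r1 r2 :: nat and f :: "nat list \<Rightarrow> nat"
  assumes "s \<ge> 1"
    and "l + 1 + r \<ge> 2"
    and "local_rule s (l + 1 + r) f"
    and "k \<ge> 1"
    and "RG_condition b s l r f k r1 r2"
    and "coprime r1 r2"
  shows "\<forall>n::nat. int n > int k + int r1 * int r2 - int r1 - int r2 \<longrightarrow>
           \<not> n_cell_reversible b s l r f n"
proof (intro allI impI notI)
  fix n assume nb: "int n > int k + int r1 * int r2 - int r1 - int r2"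
    and rev: "n_cell_reversible b s l r f n"
  have m: "l + r \<ge> 1" using assms(2) by simp
  have sur: "global_map b l r f ` configs s n = configs s n"
    using rev unfolding n_cell_reversible_def bij_betw_def by blast
  show False
  proof (cases b)
    case Null
    obtain y where y: "length y = n" "set y \<subseteq> {..<s}"
      "deltas (null_delta s l r f) (null_root s l r) y \<inter> null_accept s l r = {}"
      using word_exists[OF _ assms(6) nb, of s "null_root s l r" "null_accept s l r" "null_delta s l r f"] assms(5) Null
      unfolding RG_condition_def by auto
    have "y \<in> configs s n" using y by (simp add: configs_def)
    then obtain x where x: "x \<in> configs s n" "global_map Null l r f x = y" using sur Null by force
    have ln: "length x = n" "set x \<subseteq> {..<s}" using x by (auto simp: configs_def)
    have "win (cell Null x) l (l + r) n \<in> deltas (null_delta s l r f) (null_root s l r) y"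
      using null_inv[OF x(1) assms(1) m, of n f] x(2) y(1) by simp
    moreover have "win (cell Null x) l (l + r) n \<in> null_accept s l r"
      using cell_null_lt[OF ln(2) assms(1)] cell_null_big[of x] ln(1)
      by (auto simp: null_accept_def tuples_def win_def drop_map)
    ultimately show False using y(3) by blast
  next
    case Periodic
    obtain y where y: "length y = n" "set y \<subseteq> {..<s}"
      "deltas (per_delta s l r f) (per_root s l r) y \<inter> per_root s l r = {}"
      using word_exists[OF _ assms(6) nb, of s "per_root s l r" "per_root s l r" "per_delta s l r f"] assms(5) Periodic
      unfolding RG_condition_def by auto
    have n1: "n \<ge> 1"
    proof (rule ccontr)
      assume "\<not> n \<ge> 1" hence "n = 0" by simp
      hence "y = []" using y(1) by simp
      hence "deltas (per_delta s l r f) (per_root s l r) y = per_root s l r" by (simp add: deltas_def)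
      moreover have "(replicate (l+r) 0, replicate (l+r) 0) \<in> per_root s l r"
        using assms(1) by (auto simp: per_root_def tuples_def)
      ultimately show False using y(3) by blast
    qed
    have "y \<in> configs s n" using y by (simp add: configs_def)
    then obtain x where x: "x \<in> configs s n" "global_map Periodic l r f x = y" using sur Periodic by force
    have ln: "length x = n" "set x \<subseteq> {..<s}" using x by (auto simp: configs_def)
    have "(win (cell Periodic x) l (l + r) 0, win (cell Periodic x) l (l + r) n)
       \<in> deltas (per_delta s l r f) (per_root s l r) y"
      using per_inv[OF x(1) n1 m, of n f] x(2) y(1) by simp
    moreover have "(win (cell Periodic x) l (l + r) 0, win (cell Periodic x) l (l + r) n) \<in> per_root s l r"
      using cell_per_lt[OF ln(2)] ln(1) n1 win_per_n[of x l "l+r"]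
      by (auto simp: per_root_def tuples_def win_def)
    ultimately show False using y(3) by blast
  qed
qed

end
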